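(* Let $G$ be a simple undirected graph on vertex set $[n]$ and let $I_H\subseteq[n]$ be a vertex set whose induced subgraph $H=G[I_H]$ is triangle-free. Then for every $X\in\operatorname{R}_1[\mathcal{M}_n^+(G)]$, the comparison matrix of the principal submatrix satisfies $M(X[I_H])\ge 0$.
   Context: $\mathcal{M}_n^+(G)$ is the cone of $n\times n$ complex PSD matrices $X$ with $X_{ij}=0$ whenever $i\neq j$ and $\{i,j\}$ is not an edge of $G$. For a cone $\mathcal{C}\subseteq\mathcal{M}_n^+$, $\operatorname{R}_1[\mathcal{C}]$ is the convex cone generated by the rank-1 matrices in $\mathcal{C}$. $X[I]$ denotes the principal submatrix with rows and columns in $I$. The comparison matrix $M(Y)$ of a square matrix $Y$ is defined by $M(Y)_{ii}=|Y_{ii}|$ and $M(Y)_{ij}=-|Y_{ij}|$ for $i\ne j$. A graph is triangle-free if it contains no 3-cycle. *)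

theory Defs
  imports Complex_Main "HOL-Library.Complex_Order"
begin

text \<open>n x n complex matrices are represented as functions nat => nat => complex,
  only the entries with indices < n being relevant. Vertex set [n] = {0..<n}.\<close>

definition hermitian :: "nat \<Rightarrow> (nat \<Rightarrow> nat \<Rightarrow> complex) \<Rightarrow> bool" where
  "hermitian n X \<longleftrightarrow> (\<forall>i<n. \<forall>j<n. X i j = cnj (X j i))"

definition psd :: "nat \<Rightarrow> (nat \<Rightarrow> nat \<Rightarrow> complex) \<Rightarrow> bool" where
  "psd n X \<longleftrightarrow> hermitian n X \<and>
     (\<forall>v :: nat \<Rightarrow> complex. 0 \<le> (\<Sum>i<n. \<Sum>j<n. cnj (v i) * X i j * v j))"

definition simple_graph :: "nat \<Rightarrow> (nat \<Rightarrow> nat \<Rightarrow> bool) \<Rightarrow> bool" where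
  "simple_graph n E \<longleftrightarrow> (\<forall>i<n. \<not> E i i) \<and> (\<forall>i<n. \<forall>j<n. E i j \<longleftrightarrow> E j i)"

definition M_plus :: "nat \<Rightarrow> (nat \<Rightarrow> nat \<Rightarrow> bool) \<Rightarrow> (nat \<Rightarrow> nat \<Rightarrow> complex) set" where
  "M_plus n E = {X. psd n X \<and> (\<forall>i<n. \<forall>j<n. i \<noteq> j \<and> \<not> E i j \<longrightarrow> X i j = 0)}"

definition rank_one :: "nat \<Rightarrow> (nat \<Rightarrow> nat \<Rightarrow> complex) \<Rightarrow> bool" where
  "rank_one n X \<longleftrightarrow> (\<exists>i<n. \<exists>j<n. X i j \<noteq> 0) \<and>
     (\<exists>u w :: nat \<Rightarrow> complex. \<forall>i<n. \<forall>j<n. X i j = u i * w j)"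

text \<open>R_1[C]: the convex cone generated by the rank-one matrices in C
  (finite nonnegative combinations; the empty combination gives 0).\<close>
definition R1 :: "nat \<Rightarrow> (nat \<Rightarrow> nat \<Rightarrow> complex) set \<Rightarrow> (nat \<Rightarrow> nat \<Rightarrow> complex) set" where
  "R1 n C = {X. \<exists>(m::nat) (c::nat \<Rightarrow> real) Y.
      (\<forall>k<m. c k \<ge> 0 \<and> Y k \<in> C \<and> rank_one n (Y k)) \<and>
      (\<forall>i<n. \<forall>j<n. X i j = (\<Sum>k<m. complex_of_real (c k) * Y k i j))}"

definition principal_submatrix :: "(nat \<Rightarrow> nat \<Rightarrow> complex) \<Rightarrow> nat set \<Rightarrow> (nat \<Rightarrow> nat \<Rightarrow> complex)" where
  "principal_submatrix X I = (\<lambda>a b. X (sorted_list_of_set I ! a) (sorted_list_of_set I ! b))"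

definition comparison_matrix :: "(nat \<Rightarrow> nat \<Rightarrow> complex) \<Rightarrow> (nat \<Rightarrow> nat \<Rightarrow> complex)" where
  "comparison_matrix Y = (\<lambda>i j. if i = j then complex_of_real (cmod (Y i i))
                                 else - complex_of_real (cmod (Y i j)))"

definition triangle_free_on :: "(nat \<Rightarrow> nat \<Rightarrow> bool) \<Rightarrow> nat set \<Rightarrow> bool" where
  "triangle_free_on E I \<longleftrightarrow>
     \<not> (\<exists>a\<in>I. \<exists>b\<in>I. \<exists>c\<in>I. a \<noteq> b \<and> b \<noteq> c \<and> a \<noteq> c \<and> E a b \<and> E b c \<and> E a c)"

end

theory Submission
  imports Defs
begin

lemma psd_diag:
  assumes "psd n Y" "i < n" shows "Y i i \<ge> 0"
proof -
  let ?v = "\<lambda>j. if j = i then (1::complex) else 0"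
  have "0 \<le> (\<Sum>a<n. \<Sum>b<n. cnj (?v a) * Y a b * ?v b)" using assms(1) unfolding psd_def by (rule conjE) (erule allE)
  also have "\<dots> = (\<Sum>a<n. if a = i then Y i i else 0)"
    using assms(2) by (intro sum.cong refl) (simp add: if_distrib[of "\<lambda>x. _ * x"] sum.delta cong: if_cong)
  also have "\<dots> = Y i i" using assms(2) by (simp add: sum.delta)
  finally show ?thesis .
qed

lemma nonneg_cmod: assumes "(z::complex) \<ge> 0" shows "cmod z = Re z" "Im z = 0"
proof -
  show "Im z = 0" using assms by (simp add: less_eq_complex_def)
  then have "z = complex_of_real (Re z)" by (simp add: complex_eq_iff)
  then show "cmod z = Re z" using assms by (metis less_eq_complex_def norm_of_real abs_of_nonneg zero_complex.sel(1))
qed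

lemma rank1_abs:
  assumes "psd n Y" "rank_one n Y" "a < n" "b < n"
  shows "cmod (Y a b) = sqrt (Re (Y a a)) * sqrt (Re (Y b b))"
proof -
  obtain u w where uw: "\<forall>i<n. \<forall>j<n. Y i j = u i * w j" using assms(2) unfolding rank_one_def by blast
  have h: "Y b a = cnj (Y a b)" using assms(1,3,4) unfolding psd_def hermitian_def by blast
  have e: "Y a b * Y b a = Y a a * Y b b" using uw assms(3,4) by (simp add: algebra_simps)
  have "(cmod (Y a b))^2 = cmod (Y a b) * cmod (Y b a)" using h by (simp add: power2_eq_square)
  also have "\<dots> = cmod (Y a a) * cmod (Y b b)" using e by (metis norm_mult)
  also have "\<dots> = Re (Y a a) * Re (Y b b)" using nonneg_cmod psd_diag assms by metis
  finally have "cmod (Y a b) = sqrt (Re (Y a a) * Re (Y b b))" by (metis norm_ge_zero real_sqrt_unique)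
  then show ?thesis by (simp add: real_sqrt_mult)
qed

lemma two_supp:
  fixes t :: "nat \<Rightarrow> real"
  assumes "finite J"
    and tri: "\<And>a b c. a\<in>J \<Longrightarrow> b\<in>J \<Longrightarrow> c\<in>J \<Longrightarrow> a\<noteq>b \<Longrightarrow> b\<noteq>c \<Longrightarrow> a\<noteq>c \<Longrightarrow>
       t a \<noteq> 0 \<Longrightarrow> t b \<noteq> 0 \<Longrightarrow> t c \<noteq> 0 \<Longrightarrow> False"
  shows "0 \<le> (\<Sum>a\<in>J. \<Sum>b\<in>J. if a = b then (t a)^2 else - (t a * t b))"
proof -
  have "(\<Sum>a\<in>J. \<Sum>b\<in>J. if a = b then (t a)^2 else - (t a * t b))
      = (\<Sum>a\<in>J. \<Sum>b\<in>J. (if a = b then 2*(t a)^2 else 0) - t a * t b)"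
    by (intro sum.cong refl) (auto simp: power2_eq_square)
  also have "\<dots> = (\<Sum>a\<in>J. 2*(t a)^2) - (\<Sum>a\<in>J. \<Sum>b\<in>J. t a * t b)"
    using assms(1) by (simp add: sum_subtractf sum.delta)
  also have "(\<Sum>a\<in>J. \<Sum>b\<in>J. t a * t b) = (\<Sum>a\<in>J. t a)^2"
    by (simp add: power2_eq_square sum_product)
  finally have eq: "(\<Sum>a\<in>J. \<Sum>b\<in>J. if a = b then (t a)^2 else - (t a * t b))
      = 2 * (\<Sum>a\<in>J. (t a)^2) - (\<Sum>a\<in>J. t a)^2" by (simp add: sum_distrib_left)
  define S where "S = {a\<in>J. t a \<noteq> 0}"
  have SJ: "S \<subseteq> J" by (auto simp: S_def)
  have s1: "(\<Sum>a\<in>J. t a) = (\<Sum>a\<in>S. t a)"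
    by (rule sum.mono_neutral_right[OF assms(1) SJ]) (auto simp: S_def)
  have s2: "(\<Sum>a\<in>J. (t a)^2) = (\<Sum>a\<in>S. (t a)^2)"
    by (rule sum.mono_neutral_right[OF assms(1) SJ]) (auto simp: S_def)
  have "S = {} \<or> (\<exists>a. S = {a}) \<or> (\<exists>a b. a \<noteq> b \<and> S = {a, b})"
  proof (cases "S = {}")
    case False
    then obtain a where a: "a \<in> S" by blast
    show ?thesis
    proof (cases "S \<subseteq> {a}")
      case True then show ?thesis using a by blast
    next
      case False
      then obtain b where b: "b \<in> S" "b \<noteq> a" by blast
      have "S = {a, b}"
      proof
        show "S \<subseteq> {a, b}"
        proof
          fix c assume c: "c \<in> S"
          show "c \<in> {a, b}"
          proof (rule ccontr)
            assume "c \<notin> {a, b}"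
            then show False using tri[of a b c] a b c by (auto simp: S_def)
          qed
        qed
      qed (use a b in auto)
      then show ?thesis using b by blast
    qed
  qed simp
  then show ?thesis
  proof (elim disjE exE conjE)
    fix a b assume "a \<noteq> b" "S = {a, b}"
    then have "2 * (\<Sum>a\<in>J. (t a)^2) - (\<Sum>a\<in>J. t a)^2 = (t a - t b)^2"
      using s1 s2 by (simp add: power2_eq_square algebra_simps)
    then show ?thesis using eq by simp
  next
    assume "S = {}"
    then have "2 * (\<Sum>a\<in>J. (t a)^2) - (\<Sum>a\<in>J. t a)^2 = 0" using s1 s2 by simp
    then show ?thesis using eq by simp
  next
    fix a assume "S = {a}"
    then have "2 * (\<Sum>a\<in>J. (t a)^2) - (\<Sum>a\<in>J. t a)^2 = (t a)^2" using s1 s2 by simp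
    then show ?thesis using eq by simp
  qed
qed

lemma swap3: "(\<Sum>a\<in>A. \<Sum>b\<in>B. \<Sum>k\<in>K. f a b k) = (\<Sum>k\<in>K. \<Sum>a\<in>A. \<Sum>b\<in>B. f a b k)"
proof -
  have "(\<Sum>a\<in>A. \<Sum>b\<in>B. \<Sum>k\<in>K. f a b k) = (\<Sum>a\<in>A. \<Sum>k\<in>K. \<Sum>b\<in>B. f a b k)"
    by (intro sum.cong refl) (rule sum.swap)
  also have "\<dots> = (\<Sum>k\<in>K. \<Sum>a\<in>A. \<Sum>b\<in>B. f a b k)" by (rule sum.swap)
  finally show ?thesis .
qed

theorem mainTheorem6:
  fixes n :: nat and E :: "nat \<Rightarrow> nat \<Rightarrow> bool" and I :: "nat set"
    and X :: "nat \<Rightarrow> nat \<Rightarrow> complex"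
  assumes "simple_graph n E"
    and "I \<subseteq> {0..<n}"
    and "triangle_free_on E I"
    and "X \<in> R1 n (M_plus n E)"
  shows "psd (card I) (comparison_matrix (principal_submatrix X I))"
proof -
  have "\<exists>(mm::nat) c Y. (\<forall>k<mm. c k \<ge> 0 \<and> Y k \<in> M_plus n E \<and> rank_one n (Y k)) \<and>
    (\<forall>i<n. \<forall>j<n. X i j = (\<Sum>k<mm. complex_of_real (c k) * Y k i j))"
    using assms(4) unfolding R1_def by simp
  then obtain mm :: nat and c Y where
    cy: "\<forall>k<mm. c k \<ge> 0 \<and> Y k \<in> M_plus n E \<and> rank_one n (Y k)" and
    xs: "\<forall>i<n. \<forall>j<n. X i j = (\<Sum>k<mm. complex_of_real (c k) * Y k i j)"
    by blast
  have finI: "finite I" using assms(2) finite_subset by blast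
  define m where "m = card I"
  define \<sigma> where "\<sigma> = (\<lambda>a. sorted_list_of_set I ! a)"
  have \<sigma>I: "\<And>a. a < m \<Longrightarrow> \<sigma> a \<in> I"
    using finI by (metis \<sigma>_def m_def nth_mem length_sorted_list_of_set set_sorted_list_of_set)
  have \<sigma>n: "\<And>a. a < m \<Longrightarrow> \<sigma> a < n" using \<sigma>I assms(2) by (meson atLeastLessThan_iff subsetD)
  have \<sigma>inj: "\<And>a b. a < m \<Longrightarrow> b < m \<Longrightarrow> \<sigma> a = \<sigma> b \<Longrightarrow> a = b"
    using finI by (metis \<sigma>_def m_def nth_eq_iff_index_eq distinct_sorted_list_of_set length_sorted_list_of_set)
  define Z where "Z = principal_submatrix X I"
  have Zs: "\<And>a b. Z a b = X (\<sigma> a) (\<sigma> b)" by (simp add: Z_def principal_submatrix_def \<sigma>_def)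
  define C where "C = comparison_matrix Z"
  have c0: "\<And>k. k < mm \<Longrightarrow> c k \<ge> 0" using cy by blast
  have psdY: "\<And>k. k < mm \<Longrightarrow> psd n (Y k)" using cy by (simp add: M_plus_def)
  have supY: "\<And>k i j. k < mm \<Longrightarrow> i < n \<Longrightarrow> j < n \<Longrightarrow> i \<noteq> j \<Longrightarrow> Y k i j \<noteq> 0 \<Longrightarrow> E i j"
    using cy unfolding M_plus_def by blast
  have r1Y: "\<And>k. k < mm \<Longrightarrow> rank_one n (Y k)" using cy by blast
  have Xherm: "X i j = cnj (X j i)" if "i < n" "j < n" for i j
  proof -
    have "X i j = (\<Sum>k<mm. complex_of_real (c k) * Y k i j)" using xs that by blast
    also have "\<dots> = (\<Sum>k<mm. complex_of_real (c k) * cnj (Y k j i))"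
    proof (rule sum.cong[OF refl])
      fix k assume "k \<in> {..<mm}"
      then have "hermitian n (Y k)" using psdY unfolding psd_def by blast
      then have "Y k i j = cnj (Y k j i)" using that unfolding hermitian_def by blast
      then show "complex_of_real (c k) * Y k i j = complex_of_real (c k) * cnj (Y k j i)" by simp
    qed
    also have "\<dots> = cnj (X j i)" using xs that by (simp add: cnj_sum)
    finally show ?thesis .
  qed
  have Csym: "C a b = C b a" if "a < m" "b < m" for a b
  proof -
    have "cmod (Z a b) = cmod (Z b a)" using Xherm[OF \<sigma>n[OF that(1)] \<sigma>n[OF that(2)]] by (simp add: Zs)
    then show ?thesis by (simp add: C_def comparison_matrix_def)
  qed
  have Creal: "\<And>a b. cnj (C a b) = C a b" by (simp add: C_def comparison_matrix_def)
  have herm: "hermitian m C" unfolding hermitian_def using Csym Creal by metis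
  define R where "R k a = sqrt (Re (Y k (\<sigma> a) (\<sigma> a)))" for k a
  have quad: "0 \<le> (\<Sum>a<m. \<Sum>b<m. cnj (v a) * C a b * v b)" for v
  proof -
    define Q where "Q = (\<Sum>a<m. \<Sum>b<m. cnj (v a) * C a b * v b)"
    have "cnj Q = (\<Sum>a<m. \<Sum>b<m. v a * C a b * cnj (v b))"
      unfolding Q_def cnj_sum by (simp add: Creal)
    also have "\<dots> = (\<Sum>a<m. \<Sum>b<m. cnj (v b) * C b a * v a)"
      by (intro sum.cong refl) (simp add: Csym)
    also have "\<dots> = Q" unfolding Q_def by (rule sum.swap)
    finally have "cnj Q = Q" .
    then have imQ: "Im Q = 0" by (metis complex_cnj_cancel_iff complex_is_Real_iff Reals_cnj_iff)
    define x where "x a = cmod (v a)" for a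
    define T where "T a b = (if a = b then cmod (Z a a) * (x a)^2 else - (cmod (Z a b) * x a * x b))" for a b
    define T' where "T' a b = (\<Sum>k<mm. c k * (if a = b then (R k a * x a)^2 else - ((R k a * x a) * (R k b * x b))))" for a b
    have step1: "Re (cnj (v a) * C a b * v b) \<ge> T a b" for a b
    proof (cases "a = b")
      case True
      have sq: "cnj (v a) * v a = complex_of_real ((x a)^2)"
        unfolding x_def by (metis complex_norm_square mult.commute of_real_power)
      have Ca: "C a a = complex_of_real (cmod (Z a a))" by (simp add: C_def comparison_matrix_def)
      have "cnj (v a) * C a a * v a = C a a * (cnj (v a) * v a)" by algebra
      also have "\<dots> = complex_of_real (cmod (Z a a) * (x a)^2)" unfolding Ca sq of_real_mult ..
      finally have "Re (cnj (v a) * C a a * v a) = cmod (Z a a) * (x a)^2" by simp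
      then show ?thesis using True by (simp add: T_def)
    next
      case False
      have "Re (cnj (v a) * C a b * v b) = - (cmod (Z a b) * Re (cnj (v a) * v b))"
        using False by (simp add: C_def comparison_matrix_def algebra_simps)
      moreover have "Re (cnj (v a) * v b) \<le> x a * x b"
        by (metis complex_Re_le_cmod complex_mod_cnj norm_mult x_def)
      ultimately show ?thesis using False unfolding T_def
        by (simp add: mult.assoc mult_left_mono)
    qed
    have step2: "T a b \<ge> T' a b" if ab: "a < m" "b < m" for a b
    proof (cases "a = b")
      case True
      have "Re (Z a a) = (\<Sum>k<mm. c k * Re (Y k (\<sigma> a) (\<sigma> a)))"
        using xs \<sigma>n[OF ab(1)] by (simp add: Zs Re_sum)
      also have "\<dots> = (\<Sum>k<mm. c k * (R k a)^2)"
      proof (rule sum.cong[OF refl])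
        fix k assume "k \<in> {..<mm}"
        then have "Y k (\<sigma> a) (\<sigma> a) \<ge> 0" using psdY psd_diag \<sigma>n[OF ab(1)] by blast
        then have "Re (Y k (\<sigma> a) (\<sigma> a)) \<ge> 0" by (simp add: less_eq_complex_def)
        then show "c k * Re (Y k (\<sigma> a) (\<sigma> a)) = c k * (R k a)^2" by (simp add: R_def)
      qed
      finally have "(\<Sum>k<mm. c k * (R k a)^2) \<le> cmod (Z a a)"
        by (metis complex_Re_le_cmod)
      then have "(\<Sum>k<mm. c k * (R k a)^2) * (x a)^2 \<le> cmod (Z a a) * (x a)^2"
        by (simp add: mult_right_mono)
      then show ?thesis using True unfolding T_def T'_def
        by (simp add: sum_distrib_right power_mult_distrib mult.assoc)
    next
      case False
      have "cmod (Z a b) = cmod (\<Sum>k<mm. complex_of_real (c k) * Y k (\<sigma> a) (\<sigma> b))"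
        using xs \<sigma>n ab by (simp add: Zs)
      also have "\<dots> \<le> (\<Sum>k<mm. cmod (complex_of_real (c k) * Y k (\<sigma> a) (\<sigma> b)))"
        by (rule norm_sum)
      also have "\<dots> = (\<Sum>k<mm. c k * (R k a * R k b))"
        using c0 rank1_abs[OF psdY r1Y \<sigma>n[OF ab(1)] \<sigma>n[OF ab(2)]]
        by (intro sum.cong refl) (simp add: norm_mult R_def)
      finally have "cmod (Z a b) * (x a * x b) \<le> (\<Sum>k<mm. c k * (R k a * R k b)) * (x a * x b)"
        by (simp add: mult_right_mono x_def)
      moreover have "(\<Sum>k<mm. c k * (R k a * R k b)) * (x a * x b)
          = (\<Sum>k<mm. c k * ((R k a * x a) * (R k b * x b)))"
        by (simp add: sum_distrib_right sum_distrib_left mult_ac)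
      ultimately show ?thesis using False unfolding T_def T'_def
        by (simp add: sum_negf mult_ac)
    qed
    have step3: "(\<Sum>a<m. \<Sum>b<m. T' a b) = (\<Sum>k<mm. c k * (\<Sum>a<m. \<Sum>b<m.
        (if a = b then (R k a * x a)^2 else - ((R k a * x a) * (R k b * x b)))))"
      unfolding T'_def sum_distrib_left by (rule swap3)
    have step4: "0 \<le> (\<Sum>a<m. \<Sum>b<m.
        (if a = b then (R k a * x a)^2 else - ((R k a * x a) * (R k b * x b))))" if k: "k < mm" for k
    proof (rule two_supp)
      fix a b d assume h: "a \<in> {..<m}" "b \<in> {..<m}" "d \<in> {..<m}" "a \<noteq> b" "b \<noteq> d" "a \<noteq> d"
        "R k a * x a \<noteq> 0" "R k b * x b \<noteq> 0" "R k d * x d \<noteq> 0"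
      have edge: "E (\<sigma> p) (\<sigma> q)" if "p < m" "q < m" "p \<noteq> q" "R k p \<noteq> 0" "R k q \<noteq> 0" for p q
      proof (rule supY[OF k \<sigma>n[OF that(1)] \<sigma>n[OF that(2)]])
        show "\<sigma> p \<noteq> \<sigma> q" using \<sigma>inj that by blast
        have "cmod (Y k (\<sigma> p) (\<sigma> q)) = R k p * R k q"
          using rank1_abs[OF psdY[OF k] r1Y[OF k] \<sigma>n[OF that(1)] \<sigma>n[OF that(2)]] by (simp add: R_def)
        then show "Y k (\<sigma> p) (\<sigma> q) \<noteq> 0" using that by auto
      qed
      have "E (\<sigma> a) (\<sigma> b)" "E (\<sigma> b) (\<sigma> d)" "E (\<sigma> a) (\<sigma> d)"
        using edge h by auto
      moreover have "\<sigma> a \<noteq> \<sigma> b" "\<sigma> b \<noteq> \<sigma> d" "\<sigma> a \<noteq> \<sigma> d" using \<sigma>inj h by auto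
      moreover have "\<sigma> a \<in> I" "\<sigma> b \<in> I" "\<sigma> d \<in> I" using \<sigma>I h by auto
      ultimately show False using assms(3) unfolding triangle_free_on_def by blast
    qed simp
    have "Re Q = (\<Sum>a<m. \<Sum>b<m. Re (cnj (v a) * C a b * v b))" by (simp add: Q_def Re_sum)
    also have "\<dots> \<ge> (\<Sum>a<m. \<Sum>b<m. T' a b)"
      using step1 step2 order_trans by (intro sum_mono) blast
    finally have "(\<Sum>a<m. \<Sum>b<m. T' a b) \<le> Re Q" .
    moreover have "0 \<le> (\<Sum>a<m. \<Sum>b<m. T' a b)"
      unfolding step3 using step4 c0 by (intro sum_nonneg mult_nonneg_nonneg[OF c0 step4]) auto
    ultimately have "0 \<le> Re Q" by linarith
    then show ?thesis using imQ by (simp add: less_eq_complex_def Q_def)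
  qed
  show ?thesis using herm quad unfolding psd_def C_def Z_def m_def by blast
qed

end
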